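(* Assume (A1), (A2), (A3) (see context) and let the sequences be generated by the inexact DPMM algorithm. Then for every $k\ge0$, $$Q\xi^k+V^k\in(Q+\Phi)(\widehat\xi^k)\quad(\text{i.e. }\widehat\xi^k=(Q+\Phi)^{-1}(Q\xi^k+V^k)),\qquad \xi^{k+1}=\xi^k-M(\xi^k-\widehat\xi^k),$$ where $V^k=\mathrm{col}(v_1^k,\dots,v_m^k,0_{m(p+q)},0_{r(p+q)})$ satisfies $\|V^k\|\le\varepsilon^k:=\big(\sum_{i=1}^m(\varepsilon_i^k)^2\big)^{1/2}$.
   Context: Problem. Let $m\ge2$, $n_1,\dots,n_m\ge1$, $p,q\ge0$ integers, $n=\sum_in_i$, $\mathcal V=\{1,\dots,m\}$. For $i\in\mathcal V$ let $f_i:\mathbb R^{n_i}\to\mathbb R$, $A_i\in\mathbb R^{p\times n_i}$, $b_i\in\mathbb R^p$, $g_i:\mathbb R^{n_i}\to\mathbb R^q$, $\Omega_i\subseteq\mathbb R^{n_i}$, $G_i(\mathrm x_i)=\mathrm{col}(A_i\mathrm x_i-b_i,g_i(\mathrm x_i))$, $\mathcal K=\{0_p\}\times\mathbb R^q_-$, $\mathcal K^\circ=\mathbb R^p\times\mathbb R^q_+$. Problem (P): minimize $\sum_if_i(\mathrm x_i)$ s.t. $\sum_iG_i(\mathrm x_i)\in\mathcal K$, $\mathrm x_i\in\Omega_i$. $\ell_i(\mathrm x_i,\mathrm y)=f_i(\mathrm x_i)+\mathrm y^\top G_i(\mathrm x_i)+\delta_{\Omega_i}(\mathrm x_i)-\delta_{\mathcal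 K^\circ}(\mathrm y)$ ($\delta_S$ indicator). Assumptions. (A1) $\mathcal G=(\mathcal V,\mathcal E)$ connected undirected; $L\in\mathbb R^{m\times m}$ symmetric, compatible with $\mathcal G$ ($L_{ij}=0$ for $i\ne j$, $(i,j)\notin\mathcal E$; $\mathrm{null}(L)=\mathrm{span}\{\mathbf 1_m\}$), $L=U^\top U$, $U\in\mathbb R^{r\times m}$ full row rank, $U\mathbf 1_m=0$. (A2) $f_i$ and components of $g_i$ proper closed convex, $\Omega_i$ nonempty closed convex, (P) has an optimal solution. (A3) there is $\bar{\mathrm x}$ with $\bar{\mathrm x}_i\in\mathrm{int}\,\Omega_i$, $\sum_i(A_i\bar{\mathrm x}_i-b_i)=0$, $\sum_ig_i(\bar{\mathrm x}_i)<0$. Operator. $\mathbf L=L\otimes I_{p+q}$, $\mathbf U=U\otimes I_{p+q}$; $\mathcal L(\mathrm x,\mathrm Y)=\sum_i\ell_i(\mathrm x_i,\mathrm y_i)$; $\partial_{\mathrm Y}\mathcal L:=-\partial_{\mathrm Y}[-\mathcal L]$; $\Phi(\mathrm x,\mathrm Y,\mathrm Z)=\partial_{\mathrm x}\mathcal L(\mathrm x,\mathrm Y)\times(-\partial_{\mathrm Y}\mathcal L(\mathrm x,\mathrm Y)+\mathbf U^\top\mathrm Z)\times\{-\mathbf U\mathrm Y\}$, $\mathrm Z\in\mathbb R^{r(p+q)}$. Matrices. Parameters $\theta_i,\alpha_i,\gamma_i>0$, $\beta>0$; $\Theta=\mathrm{diag}(\theta_iI_{n_i})$, $\Upsilon=\mathrm{diag}(\alpha_iI_{n_i})$,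 $\Gamma=\mathrm{diag}(\gamma_iI_{p+q})$; $Q=\begin{pmatrix}\Upsilon^{-1}&0&0\\0&\Gamma^{-1}&-\mathbf U^\top\\0&0&\frac1\beta I\end{pmatrix}$, $M=\begin{pmatrix}\Theta&0&0\\0&I&-\Gamma\mathbf U^\top\\0&0&I\end{pmatrix}$. Algorithm (inexact DPMM). $\mathcal P_{\mathcal K^\circ}(u_1,u_2)=(u_1,\max(u_2,0))$. Initialize $\mathrm x_i^0\in\Omega_i$, $\mathrm y_i^0\in\mathcal K^\circ$, $\lambda_i^0=0$. At iteration $k$, agent $i$ chooses $\varepsilon_i^k\ge0$, sets $\phi_i^k(\mathrm x_i,\mathrm y_i)=f_i(\mathrm x_i)+\frac1{2\gamma_i}(\|\mathcal P_{\mathcal K^\circ}(\mathrm y_i+\gamma_iG_i(\mathrm x_i))\|^2-\|\mathrm y_i\|^2)+\frac1{2\alpha_i}\|\mathrm x_i-\mathrm x_i^k\|^2+\delta_{\Omega_i}(\mathrm x_i)$, computes $\widehat{\mathrm x}_i^k$ and $v_i^k\in\partial_{\mathrm x_i}\phi_i^k(\widehat{\mathrm x}_i^k,\mathrm y_i^k-\gamma_i\lambda_i^k)$ with $\|v_i^k\|\le\varepsilon_i^k$, then $\widehat{\mathrm y}_i^k=\mathcal P_{\mathcal K^\circ}(\mathrm y_i^k-\gamma_i\lambda_i^k+\gamma_iG_i(\widehat{\mathrm x}_i^k))$, $\mathrm x_i^{k+1}=(1-\theta_i)\mathrm x_i^k+\theta_i\widehat{\mathrm x}_i^k$, $\lambda_i^{k+1}=\lambda_i^k+\beta\sum_jL_{ij}\widehat{\mathrm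 y}_j^k$, $\mathrm y_i^{k+1}=\widehat{\mathrm y}_i^k+\gamma_i(\lambda_i^k-\lambda_i^{k+1})$. Stack $\mathrm x^k,\mathrm Y^k,\Lambda^k=\mathrm{col}(\lambda_i^k),\widehat{\mathrm x}^k,\widehat{\mathrm Y}^k$; $\widehat\Lambda^k:=\Lambda^{k+1}$; $\mathrm Z^k,\widehat{\mathrm Z}^k$ are the vectors with $\Lambda^k=\mathbf U^\top\mathrm Z^k$, $\widehat\Lambda^k=\mathbf U^\top\widehat{\mathrm Z}^k$; $\xi^k=\mathrm{col}(\mathrm x^k,\mathrm Y^k,\mathrm Z^k)$, $\widehat\xi^k=\mathrm{col}(\widehat{\mathrm x}^k,\widehat{\mathrm Y}^k,\widehat{\mathrm Z}^k)$. *)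

theory Defs
  imports "HOL-Analysis.Analysis" "HOL-Library.Extended_Real"
begin

(* Euclidean space R^n is represented by vectors nat => real that vanish at
   coordinates >= n (coordinates are 0-based).  Agents are 0,...,m-1.
   Stacked vectors (agent-block, coordinate) are nat => nat => real. *)

type_synonym vec = "nat \<Rightarrow> real"
type_synonym blk = "nat \<Rightarrow> nat \<Rightarrow> real"
type_synonym trip = "blk \<times> blk \<times> blk"

definition rvec :: "nat \<Rightarrow> vec set" where
  "rvec n = {x. \<forall>j. n \<le> j \<longrightarrow> x j = 0}"

definition vip :: "nat \<Rightarrow> vec \<Rightarrow> vec \<Rightarrow> real" where
  "vip n a b = (\<Sum>j<n. a j * b j)"

definition vnorm :: "nat \<Rightarrow> vec \<Rightarrow> real" where
  "vnorm n a = sqrt (vip n a a)"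

definition vsubdiff :: "nat \<Rightarrow> (vec \<Rightarrow> ereal) \<Rightarrow> vec \<Rightarrow> vec set" where
  "vsubdiff n h x = {v \<in> rvec n. x \<in> rvec n \<and> h x \<noteq> \<infinity> \<and> h x \<noteq> -\<infinity> \<and>
      (\<forall>z\<in>rvec n. h x + ereal (vip n v (\<lambda>j. z j - x j)) \<le> h z)}"

(* block spaces R^{dims 0} x ... x R^{dims (nb-1)} *)
definition bspace :: "nat \<Rightarrow> (nat \<Rightarrow> nat) \<Rightarrow> blk set" where
  "bspace nb dims = {X. \<forall>i j. (nb \<le> i \<or> dims i \<le> j) \<longrightarrow> X i j = 0}"

definition bip :: "nat \<Rightarrow> (nat \<Rightarrow> nat) \<Rightarrow> blk \<Rightarrow> blk \<Rightarrow> real" where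
  "bip nb dims A B = (\<Sum>i<nb. vip (dims i) (A i) (B i))"

definition bsubdiff :: "nat \<Rightarrow> (nat \<Rightarrow> nat) \<Rightarrow> (blk \<Rightarrow> ereal) \<Rightarrow> blk \<Rightarrow> blk set" where
  "bsubdiff nb dims h X = {V \<in> bspace nb dims. X \<in> bspace nb dims \<and> h X \<noteq> \<infinity> \<and> h X \<noteq> -\<infinity> \<and>
      (\<forall>Z\<in>bspace nb dims. h X + ereal (bip nb dims V (\<lambda>i j. Z i j - X i j)) \<le> h Z)}"

definition stk :: "nat \<Rightarrow> (nat \<Rightarrow> nat) \<Rightarrow> blk \<Rightarrow> blk" where
  "stk nb dims X = (\<lambda>i j. if i < nb \<and> j < dims i then X i j else 0)"

definition cvx_set :: "nat \<Rightarrow> vec set \<Rightarrow> bool" where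
  "cvx_set n S \<longleftrightarrow> S \<subseteq> rvec n \<and>
     (\<forall>x\<in>S. \<forall>y\<in>S. \<forall>t::real. 0 \<le> t \<and> t \<le> 1 \<longrightarrow> (\<lambda>j. (1 - t) * x j + t * y j) \<in> S)"

definition cvx_fun :: "nat \<Rightarrow> (vec \<Rightarrow> real) \<Rightarrow> bool" where
  "cvx_fun n h \<longleftrightarrow> (\<forall>x\<in>rvec n. \<forall>y\<in>rvec n. \<forall>t::real. 0 \<le> t \<and> t \<le> 1 \<longrightarrow>
     h (\<lambda>j. (1 - t) * x j + t * y j) \<le> (1 - t) * h x + t * h y)"

definition indic :: "vec set \<Rightarrow> vec \<Rightarrow> ereal" where
  "indic S x = (if x \<in> S then 0 else \<infinity>)"

(* G_i(x) = col(A_i x - b_i, g_i(x)) in R^{p+q};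
   A i j l = entry (j,l) of A_i, b i j = entry j of b_i, g i j = j-th component of g_i *)
definition Gfun :: "nat \<Rightarrow> nat \<Rightarrow> (nat \<Rightarrow> nat) \<Rightarrow> (nat \<Rightarrow> nat \<Rightarrow> nat \<Rightarrow> real) \<Rightarrow> blk
      \<Rightarrow> (nat \<Rightarrow> nat \<Rightarrow> vec \<Rightarrow> real) \<Rightarrow> nat \<Rightarrow> vec \<Rightarrow> vec" where
  "Gfun p q n A b g i x = (\<lambda>j. if j < p then (\<Sum>l<n i. A i j l * x l) - b i j
                             else if j < p + q then g i (j - p) x else 0)"

definition Kcone :: "nat \<Rightarrow> nat \<Rightarrow> vec set" where
  "Kcone p q = {y \<in> rvec (p + q). (\<forall>j<p. y j = 0) \<and> (\<forall>j. p \<le> j \<and> j < p + q \<longrightarrow> y j \<le> 0)}"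

definition Kpolar :: "nat \<Rightarrow> nat \<Rightarrow> vec set" where
  "Kpolar p q = {y \<in> rvec (p + q). \<forall>j. p \<le> j \<and> j < p + q \<longrightarrow> 0 \<le> y j}"

definition projK :: "nat \<Rightarrow> nat \<Rightarrow> vec \<Rightarrow> vec" where
  "projK p q u = (\<lambda>j. if j < p then u j else if j < p + q then max (u j) 0 else 0)"

definition ell :: "nat \<Rightarrow> nat \<Rightarrow> (nat \<Rightarrow> nat) \<Rightarrow> (nat \<Rightarrow> vec \<Rightarrow> real) \<Rightarrow> (nat \<Rightarrow> nat \<Rightarrow> nat \<Rightarrow> real)
      \<Rightarrow> blk \<Rightarrow> (nat \<Rightarrow> nat \<Rightarrow> vec \<Rightarrow> real) \<Rightarrow> (nat \<Rightarrow> vec set) \<Rightarrow> nat \<Rightarrow> vec \<Rightarrow> vec \<Rightarrow> ereal" where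
  "ell p q n f A b g \<Omega> i x y =
     ereal (f i x + vip (p + q) y (Gfun p q n A b g i x)) + indic (\<Omega> i) x - indic (Kpolar p q) y"

definition Lag :: "nat \<Rightarrow> nat \<Rightarrow> nat \<Rightarrow> (nat \<Rightarrow> nat) \<Rightarrow> (nat \<Rightarrow> vec \<Rightarrow> real) \<Rightarrow> (nat \<Rightarrow> nat \<Rightarrow> nat \<Rightarrow> real)
      \<Rightarrow> blk \<Rightarrow> (nat \<Rightarrow> nat \<Rightarrow> vec \<Rightarrow> real) \<Rightarrow> (nat \<Rightarrow> vec set) \<Rightarrow> blk \<Rightarrow> blk \<Rightarrow> ereal" where
  "Lag p q m n f A b g \<Omega> x Y = (\<Sum>i<m. ell p q n f A b g \<Omega> i (x i) (Y i))"

definition dxL where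
  "dxL p q m n f A b g \<Omega> x Y = bsubdiff m n (\<lambda>x'. Lag p q m n f A b g \<Omega> x' Y) x"

definition dYL where
  "dYL p q m n f A b g \<Omega> x Y =
     {(\<lambda>i j. - w i j) | w. w \<in> bsubdiff m (\<lambda>_. p + q) (\<lambda>Y'. - Lag p q m n f A b g \<Omega> x Y') Y}"

(* (U x I) Y  and  (U x I)^T Z, U an r x m matrix (U l i = entry (l,i)) *)
definition UtZ :: "nat \<Rightarrow> nat \<Rightarrow> nat \<Rightarrow> blk \<Rightarrow> blk \<Rightarrow> blk" where
  "UtZ m r d U Z = stk m (\<lambda>_. d) (\<lambda>i j. \<Sum>l<r. U l i * Z l j)"

definition UY :: "nat \<Rightarrow> nat \<Rightarrow> nat \<Rightarrow> blk \<Rightarrow> blk \<Rightarrow> blk" where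
  "UY m r d U Y = stk r (\<lambda>_. d) (\<lambda>l j. \<Sum>i<m. U l i * Y i j)"

definition PhiOp where
  "PhiOp p q m r n f A b g \<Omega> U \<xi> = (case \<xi> of (x, Y, Z) \<Rightarrow>
     {(a, c, e) | a c e. a \<in> dxL p q m n f A b g \<Omega> x Y \<and>
        (\<exists>u \<in> dYL p q m n f A b g \<Omega> x Y. c = (\<lambda>i j. - u i j + UtZ m r (p + q) U Z i j)) \<and>
        e = (\<lambda>l j. - UY m r (p + q) U Y l j)})"

definition Qop :: "nat \<Rightarrow> nat \<Rightarrow> (nat \<Rightarrow> nat) \<Rightarrow> nat \<Rightarrow> (nat \<Rightarrow> real) \<Rightarrow> (nat \<Rightarrow> real) \<Rightarrow> real
      \<Rightarrow> blk \<Rightarrow> trip \<Rightarrow> trip" where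
  "Qop m r n d \<alpha> \<gamma> \<beta> U \<xi> = (case \<xi> of (x, Y, Z) \<Rightarrow>
     (stk m n (\<lambda>i j. x i j / \<alpha> i),
      stk m (\<lambda>_. d) (\<lambda>i j. Y i j / \<gamma> i - UtZ m r d U Z i j),
      stk r (\<lambda>_. d) (\<lambda>l j. Z l j / \<beta>)))"

definition Mop :: "nat \<Rightarrow> nat \<Rightarrow> (nat \<Rightarrow> nat) \<Rightarrow> nat \<Rightarrow> (nat \<Rightarrow> real) \<Rightarrow> (nat \<Rightarrow> real)
      \<Rightarrow> blk \<Rightarrow> trip \<Rightarrow> trip" where
  "Mop m r n d \<theta> \<gamma> U \<xi> = (case \<xi> of (x, Y, Z) \<Rightarrow>
     (stk m n (\<lambda>i j. \<theta> i * x i j),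
      stk m (\<lambda>_. d) (\<lambda>i j. Y i j - \<gamma> i * UtZ m r d U Z i j),
      stk r (\<lambda>_. d) Z))"

definition tadd :: "trip \<Rightarrow> trip \<Rightarrow> trip" where
  "tadd s t = (case s of (a, c, e) \<Rightarrow> case t of (a', c', e') \<Rightarrow>
     ((\<lambda>i j. a i j + a' i j), (\<lambda>i j. c i j + c' i j), (\<lambda>i j. e i j + e' i j)))"

definition tsub :: "trip \<Rightarrow> trip \<Rightarrow> trip" where
  "tsub s t = (case s of (a, c, e) \<Rightarrow> case t of (a', c', e') \<Rightarrow>
     ((\<lambda>i j. a i j - a' i j), (\<lambda>i j. c i j - c' i j), (\<lambda>i j. e i j - e' i j)))"

definition QPhi where
  "QPhi p q m r n f A b g \<Omega> U \<alpha> \<gamma> \<beta> \<xi> =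
     {tadd (Qop m r n (p + q) \<alpha> \<gamma> \<beta> U \<xi>) w | w. w \<in> PhiOp p q m r n f A b g \<Omega> U \<xi>}"

definition tnorm :: "nat \<Rightarrow> nat \<Rightarrow> (nat \<Rightarrow> nat) \<Rightarrow> nat \<Rightarrow> trip \<Rightarrow> real" where
  "tnorm m r n d t = (case t of (a, c, e) \<Rightarrow>
     sqrt (bip m n a a + bip m (\<lambda>_. d) c c + bip r (\<lambda>_. d) e e))"

definition feasible where
  "feasible p q m n A b g \<Omega> x \<longleftrightarrow> (\<forall>i<m. x i \<in> \<Omega> i) \<and>
     (\<lambda>j. \<Sum>i<m. Gfun p q n A b g i (x i) j) \<in> Kcone p q"

definition has_optimal_solution where
  "has_optimal_solution p q m n f A b g \<Omega> \<longleftrightarrow>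
     (\<exists>xs. feasible p q m n A b g \<Omega> xs \<and>
        (\<forall>x. feasible p q m n A b g \<Omega> x \<longrightarrow> (\<Sum>i<m. f i (xs i)) \<le> (\<Sum>i<m. f i (x i))))"

end

theory Submission
  imports Defs
begin

lemma max_sq_ineq: "(max (s'::real) 0)\<^sup>2 \<le> (max s 0)\<^sup>2 + 2 * max s 0 * (s' - s) + (s' - s)\<^sup>2"
proof (cases "s \<ge> 0"; cases "s' \<ge> 0")
  assume "s \<ge> 0" "s' \<ge> 0" thus ?thesis by (simp add: power2_eq_square algebra_simps)
next
  assume "s \<ge> 0" "\<not> s' \<ge> 0" thus ?thesis by (simp add: power2_eq_square algebra_simps)
next
  assume a: "\<not> s \<ge> 0" "s' \<ge> 0"
  hence "s' * s' \<le> (s' - s) * (s' - s)" by (intro mult_mono) auto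
  thus ?thesis using a by (simp add: power2_eq_square)
next
  assume "\<not> s \<ge> 0" "\<not> s' \<ge> 0" thus ?thesis by simp
qed
lemma small_t_limit:
  fixes a b K :: real
  assumes "\<And>t. 0 < t \<Longrightarrow> t \<le> 1 \<Longrightarrow> a \<le> b + t * K"
  shows "a \<le> b"
proof (rule ccontr)
  assume "\<not> a \<le> b"
  hence ab: "a - b > 0" by simp
  define t where "t = min 1 ((a - b) / (2 * (\<bar>K\<bar> + 1)))"
  have t0: "0 < t" using ab by (simp add: t_def)
  have t1: "t \<le> 1" by (simp add: t_def)
  have "t * K \<le> t * (\<bar>K\<bar> + 1)" using t0 by (intro mult_left_mono) auto
  also have "\<dots> \<le> (a - b) / (2 * (\<bar>K\<bar> + 1)) * (\<bar>K\<bar> + 1)"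
    by (intro mult_right_mono) (auto simp: t_def)
  also have "\<dots> = (a - b) / 2" by (simp add: field_simps)
  finally have tk: "t * K \<le> (a - b)/2" .
  have "a \<le> b + t * K" using assms[OF t0 t1] .
  thus False using tk ab by argo
qed


lemma vnorm_sq: "(vnorm d u)\<^sup>2 = (\<Sum>j<d. (u j)\<^sup>2)"
  unfolding vnorm_def vip_def by (simp add: power2_eq_square sum_nonneg)

lemma projK_sq_ineq:
  assumes "j < p + q"
  shows "(projK p q s' j)\<^sup>2 \<le> (projK p q s j)\<^sup>2 + 2 * projK p q s j * (s' j - s j) + (s' j - s j)\<^sup>2"
proof (cases "j < p")
  case True then show ?thesis by (simp add: projK_def power2_eq_square algebra_simps)
next
  case False then show ?thesis using assms max_sq_ineq[of "s' j" "s j"] by (simp add: projK_def)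
qed

lemma cvx_set_sub: "cvx_set n S \<Longrightarrow> S \<subseteq> rvec n" by (simp add: cvx_set_def)

lemma rvec_comb: "x \<in> rvec n \<Longrightarrow> y \<in> rvec n \<Longrightarrow> (\<lambda>j. a * x j + c * y j) \<in> rvec n"
  by (simp add: rvec_def)

lemma agent_x:
  fixes nn p q :: nat and F :: "vec \<Rightarrow> real" and G :: "vec \<Rightarrow> vec" and \<Omega> :: "vec set"
    and w xk xh v Yh :: vec and \<gamma> \<alpha> :: real
  assumes gam: "0 < \<gamma>" and alp: "0 < \<alpha>"
  and Fc: "cvx_fun nn F"
  and Gc: "\<forall>j<p+q. cvx_fun nn (\<lambda>x. G x j)"
  and Ga: "\<forall>j<p. \<forall>x z t. G (\<lambda>l. (1-t)*x l + t*z l) j = (1-t)*G x j + t*G z j"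
  and Oc: "cvx_set nn \<Omega>"
  and vs: "v \<in> vsubdiff nn (\<lambda>x'. ereal (F x'
           + ((vnorm (p + q) (projK p q (\<lambda>j. w j + \<gamma> * G x' j)))\<^sup>2
              - (vnorm (p + q) w)\<^sup>2) / (2 * \<gamma>)
           + (vnorm nn (\<lambda>j. x' j - xk j))\<^sup>2 / (2 * \<alpha>))
         + indic \<Omega> x') xh"
  and Yh: "Yh = projK p q (\<lambda>j. w j + \<gamma> * G xh j)"
  shows "xh \<in> \<Omega> \<and> xh \<in> rvec nn \<and> v \<in> rvec nn \<and>
    (\<forall>z\<in>\<Omega>. F xh + vip (p+q) Yh (G xh) + vip nn (\<lambda>j. (xk j - xh j)/\<alpha> + v j) (\<lambda>j. z j - xh j)
        \<le> F z + vip (p+q) Yh (G z))"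
proof -
  define \<Phi> where "\<Phi> = (\<lambda>x'. F x'
           + ((vnorm (p + q) (projK p q (\<lambda>j. w j + \<gamma> * G x' j)))\<^sup>2
              - (vnorm (p + q) w)\<^sup>2) / (2 * \<gamma>)
           + (vnorm nn (\<lambda>j. x' j - xk j))\<^sup>2 / (2 * \<alpha>))"
  have vR: "v \<in> rvec nn" and xhR: "xh \<in> rvec nn" and fin: "ereal (\<Phi> xh) + indic \<Omega> xh \<noteq> \<infinity>"
    and sg: "\<forall>z\<in>rvec nn. ereal (\<Phi> xh) + indic \<Omega> xh + ereal (vip nn v (\<lambda>j. z j - xh j)) \<le> ereal (\<Phi> z) + indic \<Omega> z"
    using vs unfolding vsubdiff_def \<Phi>_def by auto
  have xhO: "xh \<in> \<Omega>" using fin by (auto simp: indic_def split: if_splits)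
  have OR: "\<Omega> \<subseteq> rvec nn" using Oc by (simp add: cvx_set_def)
  have main: "F xh + vip (p+q) Yh (G xh) + vip nn (\<lambda>j. (xk j - xh j)/\<alpha> + v j) (\<lambda>j. z j - xh j)
        \<le> F z + vip (p+q) Yh (G z)" if zO: "z \<in> \<Omega>" for z
  proof -
    have zR: "z \<in> rvec nn" using zO OR by auto
    define dd where "dd = (\<lambda>j. z j - xh j)"
    define xm where "xm = (\<lambda>l. 2 * xh l - z l)"
    have xmR: "xm \<in> rvec nn" using xhR zR by (simp add: rvec_def xm_def)
    define C where "C = (\<lambda>j. \<bar>G z j - G xh j\<bar> + \<bar>G xh j - G xm j\<bar>)"
    define D1 where "D1 = (\<Sum>j<p+q. Yh j * (G z j - G xh j))"
    define CC where "CC = (\<Sum>j<p+q. (C j)\<^sup>2)"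
    define Q1 where "Q1 = (\<Sum>j<nn. (xh j - xk j) * dd j)"
    define Q2 where "Q2 = (\<Sum>j<nn. (dd j)\<^sup>2)"
    define VV where "VV = vip nn v dd"
    have key: "VV \<le> (F z - F xh + D1 + Q1 / \<alpha>) + t * (\<gamma> * CC / 2 + Q2 / (2 * \<alpha>))"
      if t0: "0 < t" and t1: "t \<le> 1" for t
    proof -
      define zt where "zt = (\<lambda>j. (1 - t) * xh j + t * z j)"
      have ztO: "zt \<in> \<Omega>" using Oc xhO zO t0 t1 unfolding cvx_set_def zt_def by auto
      have ztR: "zt \<in> rvec nn" using ztO OR by auto
      have ztd: "\<And>j. zt j - xh j = t * dd j" by (simp add: zt_def dd_def algebra_simps)
      have s1: "\<Phi> xh + vip nn v (\<lambda>j. zt j - xh j) \<le> \<Phi> zt"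
        using sg ztR ztO xhO by (auto simp: indic_def)
      have s1': "vip nn v (\<lambda>j. zt j - xh j) = t * VV"
        by (simp add: vip_def VV_def ztd sum_distrib_left algebra_simps)
      have Fb: "F zt \<le> (1 - t) * F xh + t * F z"
        using Fc xhR zR t0 t1 unfolding cvx_fun_def zt_def by auto
      define s where "s = (\<lambda>x' j. w j + \<gamma> * G x' j)"
      have YhS: "Yh = projK p q (s xh)" using Yh by (simp add: s_def)
      have Gup: "G zt j - G xh j \<le> t * (G z j - G xh j)" if "j < p + q" for j
      proof -
        have "G zt j \<le> (1 - t) * G xh j + t * G z j"
          using Gc that xhR zR t0 t1 unfolding cvx_fun_def zt_def by auto
        thus ?thesis by (simp add: algebra_simps)
      qed
      have Glo: "- (t * \<bar>G xh j - G xm j\<bar>) \<le> G zt j - G xh j" if "j < p + q" for j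
      proof -
        define t' where "t' = t / (1 + t)"
        have t'0: "0 \<le> t'" "t' \<le> 1" using t0 by (auto simp: t'_def)
        have h1: "1 - t' = 1 / (1 + t)" using t0 by (simp add: t'_def field_simps)
        have eq: "(\<lambda>l. (1 - t') * zt l + t' * xm l) = xh"
        proof
          fix l
          have "(1 - t') * zt l + t' * xm l = ((1-t)*xh l + t*z l + t*(2*xh l - z l))/(1+t)"
            unfolding h1 by (simp add: t'_def zt_def xm_def add_divide_distrib)
          also have "\<dots> = xh l" using t0 by (simp add: field_simps)
          finally show "(1 - t') * zt l + t' * xm l = xh l" .
        qed
        have "G (\<lambda>l. (1 - t') * zt l + t' * xm l) j \<le> (1 - t') * G zt j + t' * G xm j"
          using Gc that ztR xmR t'0 unfolding cvx_fun_def by auto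
        hence "G xh j \<le> (1 - t') * G zt j + t' * G xm j" by (simp add: eq)
        hence "(1 + t) * G xh j \<le> (1 + t) * ((1 - t') * G zt j + t' * G xm j)"
          using t0 by (intro mult_left_mono) auto
        also have "\<dots> = G zt j + t * G xm j" unfolding h1 using t0 by (simp add: t'_def distrib_left)
        finally have "t * (G xh j - G xm j) \<le> G zt j - G xh j" by (simp add: algebra_simps)
        moreover have "- (t * \<bar>G xh j - G xm j\<bar>) \<le> t * (G xh j - G xm j)"
          using t0 by (simp add: abs_if algebra_simps)
        ultimately show ?thesis by linarith
      qed
      have Gsq: "(G zt j - G xh j)\<^sup>2 \<le> t\<^sup>2 * (C j)\<^sup>2" if "j < p + q" for j
      proof -
        have "\<bar>G zt j - G xh j\<bar> \<le> t * C j"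
        proof -
          have u: "t * (G z j - G xh j) \<le> t * C j" using t0 by (intro mult_left_mono) (auto simp: C_def)
          have l: "t * \<bar>G xh j - G xm j\<bar> \<le> t * C j" using t0 by (intro mult_left_mono) (auto simp: C_def)
          show ?thesis using Gup[OF that] Glo[OF that] u l by (simp only: abs_le_iff) linarith
        qed
        hence "\<bar>G zt j - G xh j\<bar>\<^sup>2 \<le> (t * C j)\<^sup>2" by (intro power_mono) auto
        thus ?thesis by (simp add: power_mult_distrib)
      qed
      have Ylin: "Yh j * (G zt j - G xh j) \<le> t * (Yh j * (G z j - G xh j))" if "j < p + q" for j
      proof (cases "j < p")
        case True
        have "G zt j = (1-t)*G xh j + t*G z j" using Ga True unfolding zt_def by blast
        hence "G zt j - G xh j = t * (G z j - G xh j)" by (simp add: algebra_simps)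
        thus ?thesis by simp
      next
        case False
        have "0 \<le> Yh j" using False that by (simp add: YhS projK_def)
        from mult_left_mono[OF Gup[OF that] this] show ?thesis by (simp add: algebra_simps)
      qed
      have proj: "(vnorm (p + q) (projK p q (s zt)))\<^sup>2 - (vnorm (p + q) (projK p q (s xh)))\<^sup>2
          \<le> (\<Sum>j<p+q. 2 * \<gamma> * (Yh j * (G zt j - G xh j)) + \<gamma>\<^sup>2 * (G zt j - G xh j)\<^sup>2)"
      proof -
        have "(vnorm (p + q) (projK p q (s zt)))\<^sup>2 - (vnorm (p + q) (projK p q (s xh)))\<^sup>2
            = (\<Sum>j<p+q. (projK p q (s zt) j)\<^sup>2 - (projK p q (s xh) j)\<^sup>2)"
          by (simp add: vnorm_sq sum_subtractf)
        also have "\<dots> \<le> (\<Sum>j<p+q. 2 * \<gamma> * (Yh j * (G zt j - G xh j)) + \<gamma>\<^sup>2 * (G zt j - G xh j)\<^sup>2)"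
        proof (rule sum_mono)
          fix j assume "j \<in> {..<p+q}"
          hence j: "j < p + q" by simp
          have e: "s zt j - s xh j = \<gamma> * (G zt j - G xh j)" by (simp add: s_def algebra_simps)
          show "(projK p q (s zt) j)\<^sup>2 - (projK p q (s xh) j)\<^sup>2
              \<le> 2 * \<gamma> * (Yh j * (G zt j - G xh j)) + \<gamma>\<^sup>2 * (G zt j - G xh j)\<^sup>2"
          proof -
            have sq: "(\<gamma> * (G zt j - G xh j))\<^sup>2 = \<gamma>\<^sup>2 * (G zt j - G xh j)\<^sup>2"
              by (simp add: power_mult_distrib)
            have m: "2 * projK p q (s xh) j * (\<gamma> * (G zt j - G xh j)) = 2 * \<gamma> * (projK p q (s xh) j * (G zt j - G xh j))"
              by (simp add: ac_simps)
            show ?thesis using projK_sq_ineq[OF j, of "s zt" "s xh"] unfolding e YhS sq m by linarith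
          qed
        qed
        finally show ?thesis .
      qed
      have projb: "(\<Sum>j<p+q. 2 * \<gamma> * (Yh j * (G zt j - G xh j)) + \<gamma>\<^sup>2 * (G zt j - G xh j)\<^sup>2)
          \<le> 2 * \<gamma> * (t * D1) + \<gamma>\<^sup>2 * (t\<^sup>2 * CC)"
      proof -
        have "(\<Sum>j<p+q. 2 * \<gamma> * (Yh j * (G zt j - G xh j)) + \<gamma>\<^sup>2 * (G zt j - G xh j)\<^sup>2)
           \<le> (\<Sum>j<p+q. 2 * \<gamma> * (t * (Yh j * (G z j - G xh j))) + \<gamma>\<^sup>2 * (t\<^sup>2 * (C j)\<^sup>2))"
        proof (rule sum_mono)
          fix j assume "j \<in> {..<p+q}"
          hence j: "j < p + q" by simp
          show "2 * \<gamma> * (Yh j * (G zt j - G xh j)) + \<gamma>\<^sup>2 * (G zt j - G xh j)\<^sup>2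
              \<le> 2 * \<gamma> * (t * (Yh j * (G z j - G xh j))) + \<gamma>\<^sup>2 * (t\<^sup>2 * (C j)\<^sup>2)"
            using gam Ylin[OF j] Gsq[OF j]
            by (intro add_mono mult_left_mono) auto
        qed
        also have "\<dots> = 2 * \<gamma> * (t * D1) + \<gamma>\<^sup>2 * (t\<^sup>2 * CC)"
          by (simp add: D1_def CC_def sum.distrib sum_distrib_left)
        finally show ?thesis .
      qed
      have quad: "(vnorm nn (\<lambda>j. zt j - xk j))\<^sup>2 - (vnorm nn (\<lambda>j. xh j - xk j))\<^sup>2 = 2 * t * Q1 + t\<^sup>2 * Q2"
      proof -
        have ee: "(\<lambda>j. zt j - xk j) = (\<lambda>j. (xh j - xk j) + t * dd j)" by (rule ext) (simp add: zt_def dd_def algebra_simps)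
        have "(vnorm nn (\<lambda>j. zt j - xk j))\<^sup>2 = (\<Sum>j<nn. ((xh j - xk j) + t * dd j)\<^sup>2)"
          unfolding ee vnorm_sq by (rule refl)
        also have "\<dots> = (\<Sum>j<nn. (xh j - xk j)\<^sup>2 + 2 * t * ((xh j - xk j) * dd j) + t\<^sup>2 * (dd j)\<^sup>2)"
          by (rule sum.cong) (simp_all add: power2_eq_square algebra_simps)
        also have "\<dots> = (\<Sum>j<nn. (xh j - xk j)\<^sup>2) + 2 * t * Q1 + t\<^sup>2 * Q2"
          by (simp add: Q1_def Q2_def sum.distrib sum_distrib_left)
        finally show ?thesis by (simp add: vnorm_sq)
      qed
      have "t * VV \<le> \<Phi> zt - \<Phi> xh" using s1 s1' by linarith
      also have "\<Phi> zt - \<Phi> xh = (F zt - F xh)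
          + ((vnorm (p + q) (projK p q (s zt)))\<^sup>2 - (vnorm (p + q) (projK p q (s xh)))\<^sup>2) / (2 * \<gamma>)
          + ((vnorm nn (\<lambda>j. zt j - xk j))\<^sup>2 - (vnorm nn (\<lambda>j. xh j - xk j))\<^sup>2) / (2 * \<alpha>)"
        by (simp add: \<Phi>_def s_def diff_divide_distrib)
      also have "\<dots> \<le> t * (F z - F xh) + (2 * \<gamma> * (t * D1) + \<gamma>\<^sup>2 * (t\<^sup>2 * CC)) / (2 * \<gamma>)
          + (2 * t * Q1 + t\<^sup>2 * Q2) / (2 * \<alpha>)"
      proof -
        have a1: "F zt - F xh \<le> t * (F z - F xh)" using Fb by (simp add: algebra_simps)
        have a2: "((vnorm (p + q) (projK p q (s zt)))\<^sup>2 - (vnorm (p + q) (projK p q (s xh)))\<^sup>2) / (2 * \<gamma>)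
           \<le> (2 * \<gamma> * (t * D1) + \<gamma>\<^sup>2 * (t\<^sup>2 * CC)) / (2 * \<gamma>)"
          using proj projb gam by (intro divide_right_mono) auto
        show ?thesis unfolding quad using a1 a2 by linarith
      qed
      also have "\<dots> = t * ((F z - F xh + D1 + Q1 / \<alpha>) + t * (\<gamma> * CC / 2 + Q2 / (2 * \<alpha>)))"
        using gam alp by (simp add: field_simps power2_eq_square)
      finally have "t * VV \<le> t * ((F z - F xh + D1 + Q1 / \<alpha>) + t * (\<gamma> * CC / 2 + Q2 / (2 * \<alpha>)))" .
      thus ?thesis using t0 by simp
    qed
    have lim: "VV \<le> F z - F xh + D1 + Q1 / \<alpha>"
      by (rule small_t_limit[where K = "\<gamma> * CC / 2 + Q2 / (2 * \<alpha>)"]) (rule key)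
    have e1: "vip nn (\<lambda>j. (xk j - xh j)/\<alpha> + v j) (\<lambda>j. z j - xh j) = VV - Q1 / \<alpha>"
    proof -
      have "vip nn (\<lambda>j. (xk j - xh j)/\<alpha> + v j) (\<lambda>j. z j - xh j)
          = (\<Sum>j<nn. v j * dd j - ((xh j - xk j) * dd j)/\<alpha>)"
        unfolding vip_def using alp by (intro sum.cong) (simp_all add: dd_def field_simps)
      also have "\<dots> = VV - Q1 / \<alpha>"
        by (simp add: sum_subtractf sum_divide_distrib VV_def vip_def Q1_def)
      finally show ?thesis .
    qed
    have e2: "vip (p+q) Yh (G z) - vip (p+q) Yh (G xh) = D1"
      by (simp add: vip_def D1_def sum_subtractf algebra_simps)
    show ?thesis using lim e1 e2 by linarith
  qed
  show ?thesis using xhO xhR vR main by blast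
qed



lemma stk_eq: "i < nb \<Longrightarrow> X i \<in> rvec (dims i) \<Longrightarrow> stk nb dims X i = X i"
  by (auto simp: stk_def rvec_def intro!: ext)

lemma bspace_rvec: "Z \<in> bspace nb dims \<Longrightarrow> i < nb \<Longrightarrow> Z i \<in> rvec (dims i)"
  by (auto simp: bspace_def rvec_def)

lemma stk_bspace: "stk nb dims X \<in> bspace nb dims"
  by (auto simp: stk_def bspace_def)

lemma vip_stk: "i < nb \<Longrightarrow> vip (dims i) (stk nb dims X i) y = vip (dims i) (X i) y"
  by (simp add: vip_def stk_def)

lemma vip_stk2: "i < nb \<Longrightarrow> vip (dims i) y (stk nb dims X i) = vip (dims i) y (X i)"
  by (simp add: vip_def stk_def)

lemma projK_Kpolar: "projK p q s \<in> Kpolar p q"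
  by (auto simp: projK_def Kpolar_def rvec_def)

lemma proj_var:
  fixes \<gamma> :: real
  assumes gam: "0 < \<gamma>" and j: "j < p + q" and Y'pos: "p \<le> j \<Longrightarrow> 0 \<le> Y' j"
    and Yh: "Yh j = projK p q s j" and s: "s j = w j + \<gamma> * G j"
  shows "Y' j * G j \<le> Yh j * G j + (Yh j - w j) / \<gamma> * (Y' j - Yh j)"
proof -
  have Gj: "G j = (s j - w j) / \<gamma>" using s gam by (simp add: field_simps)
  have "(Y' j - Yh j) * (s j - Yh j) \<le> 0"
  proof (cases "j < p")
    case True then show ?thesis using Yh by (simp add: projK_def)
  next
    case False
    show ?thesis
    proof (cases "s j \<ge> 0")
      case True then show ?thesis using False j Yh by (simp add: projK_def)
    next
      case False2: False
      hence "Yh j = 0" using False j Yh by (simp add: projK_def)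
      moreover have "0 \<le> Y' j" using False Y'pos by simp
      ultimately show ?thesis using False2 by (simp add: mult_nonneg_nonpos)
    qed
  qed
  hence "(Y' j - Yh j) * (s j - Yh j) / \<gamma> \<le> 0" using gam by (simp add: divide_nonpos_pos)
  moreover have "Y' j * G j - Yh j * G j - (Yh j - w j)/\<gamma> * (Y' j - Yh j) = (Y' j - Yh j) * (s j - Yh j) / \<gamma>"
    unfolding Gj using gam by (simp add: field_simps)
  ultimately show ?thesis by linarith
qed



theorem lemma2:
  fixes m p q r :: nat and n :: "nat \<Rightarrow> nat"
    and f :: "nat \<Rightarrow> vec \<Rightarrow> real" and A :: "nat \<Rightarrow> nat \<Rightarrow> nat \<Rightarrow> real" and b :: blk
    and g :: "nat \<Rightarrow> nat \<Rightarrow> vec \<Rightarrow> real" and \<Omega> :: "nat \<Rightarrow> vec set"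
    and E :: "(nat \<times> nat) set" and L U :: blk
    and \<theta> \<alpha> \<gamma> :: "nat \<Rightarrow> real" and \<beta> :: real
    and x xh Y Yh lam Z v :: "nat \<Rightarrow> blk" and eps :: "nat \<Rightarrow> nat \<Rightarrow> real"
  assumes m2: "2 \<le> m" and n1: "\<forall>i<m. 1 \<le> n i"
    \<comment> \<open>(A1)\<close>
    and E_V: "E \<subseteq> {..<m} \<times> {..<m}" and E_sym: "sym E"
    and E_conn: "\<forall>i<m. \<forall>j<m. (i, j) \<in> E\<^sup>*"
    and L_sym: "\<forall>i<m. \<forall>j<m. L i j = L j i"
    and L_compat: "\<forall>i<m. \<forall>j<m. i \<noteq> j \<and> (i, j) \<notin> E \<longrightarrow> L i j = 0"
    and L_null: "\<forall>w\<in>rvec m. (\<forall>i<m. (\<Sum>j<m. L i j * w j) = 0) \<longleftrightarrow> (\<exists>c. \<forall>i<m. w i = c)"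
    and L_UU: "\<forall>i<m. \<forall>j<m. L i j = (\<Sum>l<r. U l i * U l j)"
    and U_rank: "\<forall>c\<in>rvec r. (\<forall>i<m. (\<Sum>l<r. c l * U l i) = 0) \<longrightarrow> (\<forall>l<r. c l = 0)"
    and U_one: "\<forall>l<r. (\<Sum>i<m. U l i) = 0"
    \<comment> \<open>(A2)\<close>
    and f_cvx: "\<forall>i<m. cvx_fun (n i) (f i)"
    and g_cvx: "\<forall>i<m. \<forall>j<q. cvx_fun (n i) (g i j)"
    and \<Omega>_cvx: "\<forall>i<m. cvx_set (n i) (\<Omega> i)"
    and \<Omega>_ne: "\<forall>i<m. \<Omega> i \<noteq> {}"
    and \<Omega>_closed: "\<forall>i<m. closed (\<Omega> i)"
    and opt: "has_optimal_solution p q m n f A b g \<Omega>"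
    \<comment> \<open>(A3)\<close>
    and slater: "\<exists>xb. (\<forall>i<m. xb i \<in> (top_of_set (rvec (n i))) interior_of (\<Omega> i)) \<and>
        (\<forall>j<p. (\<Sum>i<m. (\<Sum>l<n i. A i j l * xb i l) - b i j) = 0) \<and>
        (\<forall>j<q. (\<Sum>i<m. g i j (xb i)) < 0)"
    \<comment> \<open>parameters\<close>
    and \<theta>_pos: "\<forall>i<m. 0 < \<theta> i" and \<alpha>_pos: "\<forall>i<m. 0 < \<alpha> i"
    and \<gamma>_pos: "\<forall>i<m. 0 < \<gamma> i" and \<beta>_pos: "0 < \<beta>"
    \<comment> \<open>initialization\<close>
    and x0: "\<forall>i<m. x 0 i \<in> \<Omega> i"
    and Y0: "\<forall>i<m. Y 0 i \<in> Kpolar p q"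
    and lam0: "\<forall>i<m. lam 0 i = (\<lambda>_. 0)"
    \<comment> \<open>inexact DPMM iteration\<close>
    and eps_nn: "\<forall>k. \<forall>i<m. 0 \<le> eps k i"
    and v_sub: "\<forall>k. \<forall>i<m. v k i \<in> vsubdiff (n i)
        (\<lambda>x'. ereal (f i x'
           + ((vnorm (p + q) (projK p q (\<lambda>j. (Y k i j - \<gamma> i * lam k i j)
                                              + \<gamma> i * Gfun p q n A b g i x' j)))\<^sup>2
              - (vnorm (p + q) (\<lambda>j. Y k i j - \<gamma> i * lam k i j))\<^sup>2) / (2 * \<gamma> i)
           + (vnorm (n i) (\<lambda>j. x' j - x k i j))\<^sup>2 / (2 * \<alpha> i))
         + indic (\<Omega> i) x')
        (xh k i)"
    and v_small: "\<forall>k. \<forall>i<m. vnorm (n i) (v k i) \<le> eps k i"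
    and Yh_def: "\<forall>k. \<forall>i<m. Yh k i =
        projK p q (\<lambda>j. Y k i j - \<gamma> i * lam k i j + \<gamma> i * Gfun p q n A b g i (xh k i) j)"
    and x_upd: "\<forall>k. \<forall>i<m. x (Suc k) i = (\<lambda>j. (1 - \<theta> i) * x k i j + \<theta> i * xh k i j)"
    and lam_upd: "\<forall>k. \<forall>i<m. lam (Suc k) i = (\<lambda>j. lam k i j + \<beta> * (\<Sum>j'<m. L i j' * Yh k j' j))"
    and Y_upd: "\<forall>k. \<forall>i<m. Y (Suc k) i = (\<lambda>j. Yh k i j + \<gamma> i * (lam k i j - lam (Suc k) i j))"
    \<comment> \<open>Z^k: the vectors in R^{r(p+q)} with Lambda^k = (U x I)^T Z^k\<close>
    and Z_space: "\<forall>k. Z k \<in> bspace r (\<lambda>_. p + q)"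
    and Z_def: "\<forall>k. \<forall>i<m. \<forall>j<p + q. lam k i j = (\<Sum>l<r. U l i * Z k l j)"
  shows "\<forall>k.
     (let \<xi> = (stk m n (x k), stk m (\<lambda>_. p + q) (Y k), stk r (\<lambda>_. p + q) (Z k));
          \<xi>h = (stk m n (xh k), stk m (\<lambda>_. p + q) (Yh k), stk r (\<lambda>_. p + q) (Z (Suc k)));
          \<xi>' = (stk m n (x (Suc k)), stk m (\<lambda>_. p + q) (Y (Suc k)), stk r (\<lambda>_. p + q) (Z (Suc k)));
          V = (stk m n (v k), (\<lambda>_ _. 0), (\<lambda>_ _. 0))
      in tadd (Qop m r n (p + q) \<alpha> \<gamma> \<beta> U \<xi>) V \<in> QPhi p q m r n f A b g \<Omega> U \<alpha> \<gamma> \<beta> \<xi>h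
         \<and> \<xi>' = tsub \<xi> (Mop m r n (p + q) \<theta> \<gamma> U (tsub \<xi> \<xi>h))
         \<and> tnorm m r n (p + q) V \<le> sqrt (\<Sum>i<m. (eps k i)\<^sup>2))"
proof (intro allI)
  fix k
  define X where "X = stk m n (x k)"
  define Yk where "Yk = stk m (\<lambda>_. p + q) (Y k)"
  define Zk where "Zk = stk r (\<lambda>_. p + q) (Z k)"
  define XH where "XH = stk m n (xh k)"
  define YH where "YH = stk m (\<lambda>_. p + q) (Yh k)"
  define Z1 where "Z1 = stk r (\<lambda>_. p + q) (Z (Suc k))"
  define X1 where "X1 = stk m n (x (Suc k))"
  define Y1 where "Y1 = stk m (\<lambda>_. p + q) (Y (Suc k))"
  define VV :: trip where "VV = (stk m n (v k), (\<lambda>_ _. 0::real), (\<lambda>_ _. 0::real))"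
  define G where "G = Gfun p q n A b g"
  define R where "R = (\<lambda>i. f i (xh k i) + vip (p + q) (Yh k i) (G i (xh k i)))"
  have AX: "xh k i \<in> \<Omega> i \<and> xh k i \<in> rvec (n i) \<and> v k i \<in> rvec (n i) \<and>
    (\<forall>z\<in>\<Omega> i. f i (xh k i) + vip (p+q) (Yh k i) (G i (xh k i))
        + vip (n i) (\<lambda>j. (x k i j - xh k i j)/\<alpha> i + v k i j) (\<lambda>j. z j - xh k i j)
        \<le> f i z + vip (p+q) (Yh k i) (G i z))" if i: "i < m" for i
  proof -
    have Ga: "\<forall>j<p. \<forall>x z t. G i (\<lambda>l. (1-t)*x l + t*z l) j = (1-t)*G i x j + t*G i z j"
    proof (intro allI impI)
      fix j x z and t :: real assume "j < p"
      have "(\<Sum>l<n i. A i j l * ((1-t)*x l + t*z l)) = (1-t)*(\<Sum>l<n i. A i j l * x l) + t*(\<Sum>l<n i. A i j l * z l)"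
        by (simp add: distrib_left sum.distrib sum_distrib_left mult.left_commute)
      thus "G i (\<lambda>l. (1-t)*x l + t*z l) j = (1-t)*G i x j + t*G i z j"
        using \<open>j < p\<close> by (simp add: G_def Gfun_def algebra_simps)
    qed
    have Gc: "\<forall>j<p+q. cvx_fun (n i) (\<lambda>x. G i x j)"
    proof (intro allI impI)
      fix j assume j: "j < p + q"
      show "cvx_fun (n i) (\<lambda>x. G i x j)"
      proof (cases "j < p")
        case True
        then show ?thesis using Ga unfolding cvx_fun_def by auto
      next
        case False
        have "cvx_fun (n i) (g i (j - p))" using g_cvx i j False by auto
        moreover have "\<And>x. G i x j = g i (j - p) x" using False j by (simp add: G_def Gfun_def)
        ultimately show ?thesis by simp
      qed
    qed
    show ?thesis
      using agent_x[of "\<gamma> i" "\<alpha> i" "n i" "f i" p q "G i" "\<Omega> i" "v k i"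
          "\<lambda>j. Y k i j - \<gamma> i * lam k i j" "x k i" "xh k i" "Yh k i"]
        \<gamma>_pos \<alpha>_pos f_cvx Gc Ga \<Omega>_cvx v_sub Yh_def i
      unfolding G_def by auto
  qed
  have xhR: "\<And>i. i < m \<Longrightarrow> xh k i \<in> rvec (n i)" using AX by blast
  have xhO: "\<And>i. i < m \<Longrightarrow> xh k i \<in> \<Omega> i" using AX by blast
  have YhK: "\<And>i. i < m \<Longrightarrow> Yh k i \<in> Kpolar p q" using Yh_def projK_Kpolar by auto
  have YhR: "\<And>i. i < m \<Longrightarrow> Yh k i \<in> rvec (p + q)" using YhK by (auto simp: Kpolar_def)
  have XHi: "\<And>i. i < m \<Longrightarrow> XH i = xh k i" by (simp add: XH_def stk_eq xhR)
  have YHi: "\<And>i. i < m \<Longrightarrow> YH i = Yh k i" by (simp add: YH_def stk_eq YhR)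
  have lamZ: "\<And>kk i j. i < m \<Longrightarrow> j < p + q \<Longrightarrow> UtZ m r (p + q) U (stk r (\<lambda>_. p + q) (Z kk)) i j = lam kk i j"
    using Z_def by (simp add: UtZ_def stk_def)
  have LagH: "Lag p q m n f A b g \<Omega> XH YH = ereal (\<Sum>i<m. R i)"
  proof -
    have "Lag p q m n f A b g \<Omega> XH YH = (\<Sum>i<m. ereal (R i))"
      unfolding Lag_def
      by (rule sum.cong) (auto simp: XHi YHi ell_def indic_def xhO YhK R_def G_def)
    thus ?thesis by simp
  qed
  have Zstep: "Z (Suc k) l j - Z k l j = \<beta> * (\<Sum>i<m. U l i * Yh k i j)" if l: "l < r" and j: "j < p + q" for l j
  proof -
    define cc where "cc = (\<lambda>l. if l < r then Z (Suc k) l j - Z k l j - \<beta> * (\<Sum>i<m. U l i * Yh k i j) else 0)"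
    have ccR: "cc \<in> rvec r" by (simp add: cc_def rvec_def)
    have "(\<Sum>l<r. cc l * U l i) = 0" if i: "i < m" for i
    proof -
      have "(\<Sum>l<r. cc l * U l i) = (\<Sum>l<r. U l i * Z (Suc k) l j) - (\<Sum>l<r. U l i * Z k l j)
           - \<beta> * (\<Sum>l<r. \<Sum>i'<m. U l i * U l i' * Yh k i' j)"
      proof -
        have "(\<Sum>l<r. cc l * U l i) = (\<Sum>l<r. U l i * Z (Suc k) l j - U l i * Z k l j
             - \<beta> * (\<Sum>i'<m. U l i * U l i' * Yh k i' j))"
        proof (rule sum.cong)
          fix l assume "l \<in> {..<r}"
          have "(\<Sum>i'<m. U l i' * Yh k i' j) * U l i = (\<Sum>i'<m. U l i * U l i' * Yh k i' j)"
            unfolding sum_distrib_right by (simp add: mult_ac)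
          thus "cc l * U l i = U l i * Z (Suc k) l j - U l i * Z k l j
             - \<beta> * (\<Sum>i'<m. U l i * U l i' * Yh k i' j)"
            using \<open>l \<in> {..<r}\<close> by (simp add: cc_def algebra_simps)
        qed simp
        also have "\<dots> = (\<Sum>l<r. U l i * Z (Suc k) l j) - (\<Sum>l<r. U l i * Z k l j)
           - \<beta> * (\<Sum>l<r. \<Sum>i'<m. U l i * U l i' * Yh k i' j)"
          by (simp add: sum_subtractf sum_distrib_left)
        finally show ?thesis .
      qed
      also have "(\<Sum>l<r. \<Sum>i'<m. U l i * U l i' * Yh k i' j) = (\<Sum>i'<m. L i i' * Yh k i' j)"
        by (subst sum.swap) (simp add: L_UU i sum_distrib_right)
      also have "(\<Sum>l<r. U l i * Z (Suc k) l j) - (\<Sum>l<r. U l i * Z k l j) = \<beta> * (\<Sum>i'<m. L i i' * Yh k i' j)"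
      proof -
        have "lam (Suc k) i j = lam k i j + \<beta> * (\<Sum>i'<m. L i i' * Yh k i' j)" using lam_upd i by simp
        thus ?thesis using Z_def[rule_format, OF i j] by simp
      qed
      finally show ?thesis by simp
    qed
    hence "\<forall>l<r. cc l = 0" using U_rank ccR by blast
    thus ?thesis using l by (simp add: cc_def)
  qed
  show "let \<xi> = (stk m n (x k), stk m (\<lambda>_. p + q) (Y k), stk r (\<lambda>_. p + q) (Z k));
          \<xi>h = (stk m n (xh k), stk m (\<lambda>_. p + q) (Yh k), stk r (\<lambda>_. p + q) (Z (Suc k)));
          \<xi>' = (stk m n (x (Suc k)), stk m (\<lambda>_. p + q) (Y (Suc k)), stk r (\<lambda>_. p + q) (Z (Suc k)));
          V = (stk m n (v k), (\<lambda>_ _. 0), (\<lambda>_ _. 0))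
      in tadd (Qop m r n (p + q) \<alpha> \<gamma> \<beta> U \<xi>) V \<in> QPhi p q m r n f A b g \<Omega> U \<alpha> \<gamma> \<beta> \<xi>h
         \<and> \<xi>' = tsub \<xi> (Mop m r n (p + q) \<theta> \<gamma> U (tsub \<xi> \<xi>h))
         \<and> tnorm m r n (p + q) V \<le> sqrt (\<Sum>i<m. (eps k i)\<^sup>2)"
  proof -
    have C3: "tnorm m r n (p + q) VV \<le> sqrt (\<Sum>i<m. (eps k i)\<^sup>2)"
    proof -
      have "bip m n (stk m n (v k)) (stk m n (v k)) = (\<Sum>i<m. (vnorm (n i) (v k i))\<^sup>2)"
        unfolding bip_def vnorm_sq by (rule sum.cong) (auto simp: stk_def power2_eq_square vip_def)
      also have "\<dots> \<le> (\<Sum>i<m. (eps k i)\<^sup>2)"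
      proof (rule sum_mono)
        fix i assume "i \<in> {..<m}"
        hence i: "i < m" by simp
        have "0 \<le> vnorm (n i) (v k i)" by (simp add: vnorm_def vip_def sum_nonneg)
        thus "(vnorm (n i) (v k i))\<^sup>2 \<le> (eps k i)\<^sup>2" using v_small i by (intro power_mono) auto
      qed
      finally show ?thesis by (simp add: tnorm_def VV_def bip_def vip_def)
    qed
    have C2: "(X1, Y1, Z1) = tsub (X, Yk, Zk) (Mop m r n (p + q) \<theta> \<gamma> U (tsub (X, Yk, Zk) (XH, YH, Z1)))"
    proof -
      have "X1 = (\<lambda>i j. X i j - stk m n (\<lambda>i j. \<theta> i * (X i j - XH i j)) i j)"
        using x_upd by (auto simp: X1_def X_def XH_def stk_def algebra_simps intro!: ext)
      moreover have "Y1 = (\<lambda>i j. Yk i j - stk m (\<lambda>_. p + q) (\<lambda>i j. (Yk i j - YH i j)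
          - \<gamma> i * UtZ m r (p + q) U (\<lambda>i j. Zk i j - Z1 i j) i j) i j)"
      proof (intro ext)
        fix i j
        show "Y1 i j = Yk i j - stk m (\<lambda>_. p + q) (\<lambda>i j. (Yk i j - YH i j)
          - \<gamma> i * UtZ m r (p + q) U (\<lambda>i j. Zk i j - Z1 i j) i j) i j"
        proof (cases "i < m \<and> j < p + q")
          case True
          have UU: "UtZ m r (p + q) U (\<lambda>i j. Zk i j - Z1 i j) i j = lam k i j - lam (Suc k) i j"
            using True Z_def by (simp add: UtZ_def stk_def Zk_def Z1_def right_diff_distrib sum_subtractf)
          have Ys: "Y (Suc k) i j = Yh k i j + \<gamma> i * (lam k i j - lam (Suc k) i j)"
            using Y_upd True by simp
          show ?thesis using True UU
            by (simp add: Y1_def Yk_def YH_def stk_def Ys)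
        next
          case False
          then show ?thesis by (auto simp: Y1_def Yk_def stk_def)
        qed
      qed
      moreover have "Z1 = (\<lambda>i j. Zk i j - stk r (\<lambda>_. p + q) (\<lambda>i j. Zk i j - Z1 i j) i j)"
        by (auto simp: Zk_def Z1_def stk_def intro!: ext)
      ultimately show ?thesis by (simp add: tsub_def Mop_def)
    qed
    have C1: "tadd (Qop m r n (p + q) \<alpha> \<gamma> \<beta> U (X, Yk, Zk)) VV \<in> QPhi p q m r n f A b g \<Omega> U \<alpha> \<gamma> \<beta> (XH, YH, Z1)"
    proof -
      define a where "a = stk m n (\<lambda>i j. (x k i j - xh k i j)/\<alpha> i + v k i j)"
      define c where "c = (\<lambda>i j. stk m (\<lambda>_. p+q) (\<lambda>i j. Yk i j/\<gamma> i - UtZ m r (p+q) U Zk i j) i j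
          - stk m (\<lambda>_. p+q) (\<lambda>i j. YH i j/\<gamma> i - UtZ m r (p+q) U Z1 i j) i j)"
      define e where "e = (\<lambda>l j. stk r (\<lambda>_. p+q) (\<lambda>l j. Zk l j/\<beta>) l j - stk r (\<lambda>_. p+q) (\<lambda>l j. Z1 l j/\<beta>) l j)"
      define uu where "uu = stk m (\<lambda>_. p+q) (\<lambda>i j. (Yh k i j - (Y k i j - \<gamma> i * lam k i j))/\<gamma> i)"
      have eqT: "tadd (Qop m r n (p + q) \<alpha> \<gamma> \<beta> U (X, Yk, Zk)) VV = tadd (Qop m r n (p + q) \<alpha> \<gamma> \<beta> U (XH, YH, Z1)) (a, c, e)"
      proof -
        have "(\<lambda>i j. stk m n (\<lambda>i j. X i j / \<alpha> i) i j + stk m n (v k) i j)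
            = (\<lambda>i j. stk m n (\<lambda>i j. XH i j / \<alpha> i) i j + a i j)"
          by (auto simp: a_def stk_def X_def XH_def diff_divide_distrib intro!: ext)
        thus ?thesis by (simp add: tadd_def Qop_def VV_def c_def e_def)
      qed
      have aD: "a \<in> dxL p q m n f A b g \<Omega> XH YH"
        unfolding dxL_def bsubdiff_def
      proof (intro CollectI conjI ballI)
        show "a \<in> bspace m n" unfolding a_def by (rule stk_bspace)
        show "XH \<in> bspace m n" unfolding XH_def by (rule stk_bspace)
        show "Lag p q m n f A b g \<Omega> XH YH \<noteq> \<infinity>" "Lag p q m n f A b g \<Omega> XH YH \<noteq> - \<infinity>"
          by (simp_all add: LagH)
        fix Z' assume Z': "Z' \<in> bspace m n"
        have per: "ereal (R i + vip (n i) (a i) (\<lambda>j. Z' i j - XH i j)) \<le> ell p q n f A b g \<Omega> i (Z' i) (YH i)"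
          if i: "i < m" for i
        proof -
          have va: "vip (n i) (a i) (\<lambda>j. Z' i j - XH i j)
              = vip (n i) (\<lambda>j. (x k i j - xh k i j)/\<alpha> i + v k i j) (\<lambda>j. Z' i j - xh k i j)"
            unfolding a_def using i by (simp add: vip_stk XHi)
          show ?thesis
          proof (cases "Z' i \<in> \<Omega> i")
            case True
            have "R i + vip (n i) (\<lambda>j. (x k i j - xh k i j)/\<alpha> i + v k i j) (\<lambda>j. Z' i j - xh k i j)
                \<le> f i (Z' i) + vip (p+q) (Yh k i) (G i (Z' i))"
              using AX[OF i] True unfolding R_def by blast
            then show ?thesis using True i YhK
              by (simp add: va ell_def YHi indic_def G_def)
          next
            case False
            then show ?thesis using i YhK by (simp add: ell_def YHi indic_def)
          qed
        qed
        have "ereal (\<Sum>i<m. R i + vip (n i) (a i) (\<lambda>j. Z' i j - XH i j)) \<le> Lag p q m n f A b g \<Omega> Z' YH"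
          unfolding Lag_def sum_ereal[symmetric] using per by (intro sum_mono) auto
        thus "Lag p q m n f A b g \<Omega> XH YH + ereal (bip m n a (\<lambda>i j. Z' i j - XH i j)) \<le> Lag p q m n f A b g \<Omega> Z' YH"
          by (simp add: LagH bip_def sum.distrib)
      qed
      have uc: "c = (\<lambda>i j. - uu i j + UtZ m r (p + q) U Z1 i j)"
      proof (intro ext)
        fix i j
        show "c i j = - uu i j + UtZ m r (p + q) U Z1 i j"
        proof (cases "i < m \<and> j < p + q")
          case True
          have l1: "UtZ m r (p + q) U Z1 i j = lam (Suc k) i j" using True lamZ by (simp add: Z1_def)
          have l0: "UtZ m r (p + q) U Zk i j = lam k i j" using True lamZ by (simp add: Zk_def)
          have g0: "\<gamma> i \<noteq> 0" using \<gamma>_pos True by (simp add: less_imp_neq[symmetric])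
          show ?thesis using True g0
            by (simp add: c_def uu_def stk_def l1 l0 Yk_def YH_def diff_divide_distrib)
        next
          case False
          then show ?thesis by (auto simp: c_def uu_def stk_def UtZ_def)
        qed
      qed
      have uD: "uu \<in> dYL p q m n f A b g \<Omega> XH YH"
        unfolding dYL_def
      proof (intro CollectI exI conjI)
        show "uu = (\<lambda>i j. - (\<lambda>i j. - uu i j) i j)" by simp
        show "(\<lambda>i j. - uu i j) \<in> bsubdiff m (\<lambda>_. p + q) (\<lambda>Y'. - Lag p q m n f A b g \<Omega> XH Y') YH"
          unfolding bsubdiff_def
        proof (intro CollectI conjI ballI)
          show "(\<lambda>i j. - uu i j) \<in> bspace m (\<lambda>_. p + q)" by (auto simp: uu_def stk_def bspace_def)
          show "YH \<in> bspace m (\<lambda>_. p + q)" unfolding YH_def by (rule stk_bspace)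
          show "- Lag p q m n f A b g \<Omega> XH YH \<noteq> \<infinity>" "- Lag p q m n f A b g \<Omega> XH YH \<noteq> - \<infinity>"
            by (simp_all add: LagH)
          fix Y' assume Y': "Y' \<in> bspace m (\<lambda>_. p + q)"
          have per: "ell p q n f A b g \<Omega> i (XH i) (Y' i) \<le> ereal (R i + vip (p + q) (uu i) (\<lambda>j. Y' i j - YH i j))"
            if i: "i < m" for i
          proof (cases "Y' i \<in> Kpolar p q")
            case True
            have "vip (p+q) (Y' i) (G i (xh k i)) \<le> vip (p+q) (Yh k i) (G i (xh k i)) + vip (p + q) (uu i) (\<lambda>j. Y' i j - YH i j)"
            proof -
              have "vip (p+q) (Y' i) (G i (xh k i)) \<le> (\<Sum>j<p+q. Yh k i j * G i (xh k i) j
                  + (Yh k i j - (Y k i j - \<gamma> i * lam k i j)) / \<gamma> i * (Y' i j - Yh k i j))"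
                unfolding vip_def
              proof (rule sum_mono)
                fix j assume "j \<in> {..<p+q}"
                hence j: "j < p + q" by simp
                show "Y' i j * G i (xh k i) j \<le> Yh k i j * G i (xh k i) j
                  + (Yh k i j - (Y k i j - \<gamma> i * lam k i j)) / \<gamma> i * (Y' i j - Yh k i j)"
                  apply (rule proj_var[where s = "\<lambda>j. Y k i j - \<gamma> i * lam k i j + \<gamma> i * G i (xh k i) j"])
                  using \<gamma>_pos i j True Yh_def by (auto simp: Kpolar_def G_def)
              qed
              also have "\<dots> = vip (p+q) (Yh k i) (G i (xh k i)) + vip (p + q) (uu i) (\<lambda>j. Y' i j - YH i j)"
                using i by (simp add: vip_def sum.distrib uu_def stk_def YHi)
              finally show ?thesis .
            qed
            then show ?thesis using True i xhO
              by (simp add: ell_def XHi indic_def R_def G_def)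
          next
            case False
            then show ?thesis using i xhO by (simp add: ell_def XHi indic_def)
          qed
          have LY: "Lag p q m n f A b g \<Omega> XH Y' \<le> ereal (\<Sum>i<m. R i + vip (p + q) (uu i) (\<lambda>j. Y' i j - YH i j))"
            unfolding Lag_def sum_ereal[symmetric] using per by (intro sum_mono) auto
          have bn: "bip m (\<lambda>_. p + q) (\<lambda>i j. - uu i j) (\<lambda>i j. Y' i j - YH i j)
              = - (\<Sum>i<m. vip (p + q) (uu i) (\<lambda>j. Y' i j - YH i j))"
            by (simp add: bip_def vip_def sum_negf)
          have "- ereal (\<Sum>i<m. R i + vip (p + q) (uu i) (\<lambda>j. Y' i j - YH i j)) \<le> - Lag p q m n f A b g \<Omega> XH Y'"
            using LY by (subst ereal_uminus_le_reorder) simp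
          thus "- Lag p q m n f A b g \<Omega> XH YH + ereal (bip m (\<lambda>_. p + q) (\<lambda>i j. - uu i j) (\<lambda>i j. Y' i j - YH i j))
              \<le> - Lag p q m n f A b g \<Omega> XH Y'"
            by (simp add: LagH bn sum.distrib)
        qed
      qed
      have eD: "e = (\<lambda>l j. - UY m r (p + q) U YH l j)"
      proof (intro ext)
        fix l j
        show "e l j = - UY m r (p + q) U YH l j"
        proof (cases "l < r \<and> j < p + q")
          case True
          have s: "(\<Sum>i<m. U l i * YH i j) = (\<Sum>i<m. U l i * Yh k i j)"
            by (rule sum.cong) (simp_all add: YHi)
          have "Z (Suc k) l j - Z k l j = \<beta> * (\<Sum>i<m. U l i * Yh k i j)" using Zstep True by blast
          hence "Z k l j / \<beta> - Z (Suc k) l j / \<beta> = - (\<Sum>i<m. U l i * Yh k i j)"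
            using \<beta>_pos by (simp add: field_simps)
          then show ?thesis using True by (simp add: e_def UY_def stk_def Zk_def Z1_def s)
        next
          case False
          then show ?thesis by (auto simp: e_def UY_def stk_def)
        qed
      qed
      have "(a, c, e) \<in> PhiOp p q m r n f A b g \<Omega> U (XH, YH, Z1)"
        unfolding PhiOp_def using aD uD uc eD by auto
      thus ?thesis using eqT unfolding QPhi_def by blast
    qed
    show ?thesis using C1 C2 C3
      unfolding Let_def X_def Yk_def Zk_def XH_def YH_def Z1_def X1_def Y1_def VV_def by blast
  qed
qed

end
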